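(* Let $s \ge 2$ and let $X$ be an $s$-distance set contained in the unit sphere $S^{d-1} \subset \mathbb{R}^d$, with $B(X) = \{\beta_1, \ldots, \beta_s\}$. Let $N = \binom{d+s-2}{s-1} + \binom{d+s-3}{s-2}$. If $|X| \ge 2N$, then for each $i = 1, \ldots, s$ the number \[ k_i = \prod_{j=1,\ldots,s,\ j \neq i} \frac{1 - \beta_j}{\beta_i - \beta_j} \] is an integer, and $|k_i| \le U(N)$.
   Context: A finite set $X \subset \mathbb{R}^d$ is an $s$-distance set if the set of Euclidean distances between distinct points of $X$ has exactly $s$ elements. For $X \subset S^{d-1}$, $B(X) = \{(x,y) : x, y \in X, x \neq y\}$, where $(\cdot,\cdot)$ is the standard inner product (so for $X\subset S^{d-1}$, $|B(X)|=s$). The function $U$ is defined by $U(N) = \left\lfloor \frac{1}{2} + \sqrt{\frac{N^2}{2N-2} + \frac{1}{4}} \right\rfloor$. *)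

theory Defs
  imports "HOL-Analysis.Analysis"
begin

definition distances :: "'a::metric_space set \<Rightarrow> real set" where
  "distances X = {dist x y | x y. x \<in> X \<and> y \<in> X \<and> x \<noteq> y}"

definition s_distance_set :: "'a::metric_space set \<Rightarrow> nat \<Rightarrow> bool" where
  "s_distance_set X s \<longleftrightarrow> finite X \<and> card (distances X) = s"

definition B :: "'a::real_inner set \<Rightarrow> real set" where
  "B X = {x \<bullet> y | x y. x \<in> X \<and> y \<in> X \<and> x \<noteq> y}"

definition U :: "nat \<Rightarrow> int" where
  "U N = \<lfloor>1/2 + sqrt ((real N)^2 / (2 * real N - 2) + 1/4)\<rfloor>"

end

theory Submission
  imports Defs "Jordan_Normal_Form.Char_Poly" "HOL-Library.Multiset"
begin



lemma comb_ineq: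
  fixes a b A B m :: real
  assumes "a\<^sup>2 \<le> m * A" "b\<^sup>2 \<le> B" "0 \<le> A" "0 \<le> B" "0 \<le> m"
  shows "(a + b)\<^sup>2 \<le> (m + 1) * (A + B)"
proof -
  have "(2*a*b)\<^sup>2 = 4 * a\<^sup>2 * b\<^sup>2" by (simp add: power2_eq_square)
  also have "\<dots> \<le> 4 * (m*A) * B"
    using assms by (intro mult_mono) (auto intro: mult_left_mono)
  also have "\<dots> \<le> (A + m*B)\<^sup>2"
    using sum_power2_ge_zero[of "A - m*B" 0]
    by (simp add: power2_eq_square algebra_simps)
  finally have "(2*a*b)\<^sup>2 \<le> (A + m*B)\<^sup>2" .
  hence "\<bar>2*a*b\<bar> \<le> \<bar>A + m*B\<bar>" using abs_le_square_iff by blast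
  hence "2*a*b \<le> A + m*B" using assms by auto
  thus ?thesis using assms by (simp add: power2_eq_square algebra_simps)
qed

lemma trace_bound:
  fixes f h :: "nat \<Rightarrow> nat \<Rightarrow> real"
  shows "(\<Sum>i<n. \<Sum>l<m. f l i * h l i)\<^sup>2
     \<le> real m * (\<Sum>i<n. \<Sum>j<n. (\<Sum>l<m. f l i * h l j)\<^sup>2)"
proof (induction m arbitrary: f h)
  case 0
  then show ?case by simp
next
  case (Suc m)
  define M where "M i j = (\<Sum>l<Suc m. f l i * h l j)" for i j
  define v where "v i = f m i" for i
  define S where "S = (\<Sum>j<n. \<Sum>i<n. (M i j)\<^sup>2)"
  have S_nn: "0 \<le> S" unfolding S_def by (intro sum_nonneg) auto
  have goal_eq: "?case \<longleftrightarrow> (\<Sum>i<n. M i i)\<^sup>2 \<le> real (Suc m) * (\<Sum>i<n. \<Sum>j<n. (M i j)\<^sup>2)"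
    unfolding M_def by simp
  show ?case
  proof (cases "(\<Sum>i<n. (v i)\<^sup>2) = 0")
    case True
    hence v0: "v i = 0" if "i < n" for i
      using that by (subst (asm) sum_nonneg_eq_0_iff) auto
    have Mred: "M i j = (\<Sum>l<m. f l i * h l j)" if "i < n" for i j
      unfolding M_def using v0[OF that] by (simp add: v_def)
    have "(\<Sum>i<n. M i i)\<^sup>2 \<le> real m * (\<Sum>i<n. \<Sum>j<n. (M i j)\<^sup>2)"
      using Suc.IH[of f h] by (simp add: Mred)
    also have "\<dots> \<le> real (Suc m) * (\<Sum>i<n. \<Sum>j<n. (M i j)\<^sup>2)"
      by (intro mult_right_mono) (auto intro!: sum_nonneg)
    finally show ?thesis using goal_eq by simp
  next
    case False
    define nv where "nv = sqrt (\<Sum>i<n. (v i)\<^sup>2)"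
    have pos: "0 < (\<Sum>i<n. (v i)\<^sup>2)" using False by (simp add: order_le_neq_trans sum_nonneg)
    hence nvpos: "nv > 0" unfolding nv_def by simp
    have nv2: "nv\<^sup>2 = (\<Sum>i<n. (v i)\<^sup>2)" unfolding nv_def using pos by simp
    define u where "u i = v i / nv" for i
    have uu: "(\<Sum>i<n. (u i)\<^sup>2) = 1"
      using nv2 nvpos pos by (simp add: u_def power_divide flip: sum_divide_distrib)
    have uv: "(\<Sum>i<n. v i * u i) = nv"
      using nv2 nvpos by (simp add: u_def power2_eq_square flip: sum_divide_distrib) (metis nonzero_mult_div_cancel_left order_less_irrefl)
    define w where "w j = (\<Sum>i<n. u i * M i j)" for j
    define cf where "cf l = (\<Sum>i<n. f l i * u i)" for l
    define f' where "f' l i = f l i - cf l * u i" for l i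
    define M1 where "M1 i j = (\<Sum>l<m. f' l i * h l j)" for i j
    have w_eq: "w j = (\<Sum>l<m. cf l * h l j) + nv * h m j" for j
    proof -
      have "w j = (\<Sum>i<n. \<Sum>l<Suc m. u i * (f l i * h l j))"
        unfolding w_def M_def by (simp add: sum_distrib_left distrib_left)
      also have "\<dots> = (\<Sum>l<Suc m. \<Sum>i<n. u i * (f l i * h l j))"
        by (rule sum.swap)
      also have "\<dots> = (\<Sum>l<Suc m. cf l * h l j)"
        unfolding cf_def by (simp add: sum_distrib_right sum_distrib_left mult_ac)
      also have "\<dots> = (\<Sum>l<m. cf l * h l j) + cf m * h m j" by simp
      also have "cf m = nv" unfolding cf_def using uv by (simp add: v_def)
      finally show ?thesis .
    qed
    have decomp: "M i j = M1 i j + u i * w j" for i j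
    proof -
      have "M1 i j = (\<Sum>l<m. f l i * h l j) - u i * (\<Sum>l<m. cf l * h l j)"
        unfolding M1_def f'_def by (simp add: algebra_simps sum_subtractf sum_distrib_left)
      moreover have "f m i * h m j = nv * (u i * h m j)" using nvpos by (simp add: u_def v_def)
      ultimately show ?thesis unfolding M_def w_eq by (simp add: distrib_left mult.commute)
    qed
    have orth: "(\<Sum>i<n. u i * M1 i j) = 0" for j
    proof -
      have "(\<Sum>i<n. u i * M1 i j) = (\<Sum>i<n. u i * M i j - (u i)\<^sup>2 * w j)"
        by (intro sum.cong) (auto simp: decomp power2_eq_square algebra_simps)
      also have "\<dots> = w j - (\<Sum>i<n. (u i)\<^sup>2) * w j"
        by (simp add: sum_subtractf w_def sum_distrib_right)
      finally show ?thesis using uu by simp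
    qed
    have IH: "(\<Sum>i<n. M1 i i)\<^sup>2 \<le> real m * (\<Sum>i<n. \<Sum>j<n. (M1 i j)\<^sup>2)"
      using Suc.IH[of f' h] unfolding M1_def .
    have trM: "(\<Sum>i<n. M i i) = (\<Sum>i<n. M1 i i) + (\<Sum>i<n. u i * w i)"
      by (simp add: decomp sum.distrib)
    have cross: "(\<Sum>i<n. \<Sum>j<n. M1 i j * (u i * w j)) = 0"
    proof -
      have "(\<Sum>i<n. \<Sum>j<n. M1 i j * (u i * w j)) = (\<Sum>j<n. \<Sum>i<n. M1 i j * (u i * w j))"
        by (rule sum.swap)
      also have "\<dots> = (\<Sum>j<n. w j * (\<Sum>i<n. u i * M1 i j))"
        by (simp add: sum_distrib_left mult_ac)
      finally show ?thesis using orth by simp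
    qed
    have sq2: "(\<Sum>i<n. \<Sum>j<n. (u i * w j)\<^sup>2) = (\<Sum>j<n. (w j)\<^sup>2)"
    proof -
      have "(\<Sum>i<n. \<Sum>j<n. (u i * w j)\<^sup>2) = (\<Sum>i<n. (u i)\<^sup>2 * (\<Sum>j<n. (w j)\<^sup>2))"
        by (simp add: power_mult_distrib sum_distrib_left)
      also have "\<dots> = (\<Sum>j<n. (w j)\<^sup>2)" using uu by (simp flip: sum_distrib_right)
      finally show ?thesis .
    qed
    have normM: "(\<Sum>i<n. \<Sum>j<n. (M i j)\<^sup>2) = (\<Sum>i<n. \<Sum>j<n. (M1 i j)\<^sup>2) + (\<Sum>j<n. (w j)\<^sup>2)"
    proof -
      have "(\<Sum>i<n. \<Sum>j<n. (M i j)\<^sup>2) = (\<Sum>i<n. \<Sum>j<n. (M1 i j)\<^sup>2 + 2 * (M1 i j * (u i * w j)) + (u i * w j)\<^sup>2)"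
        by (intro sum.cong refl) (simp add: decomp power2_sum algebra_simps)
      also have "\<dots> = (\<Sum>i<n. \<Sum>j<n. (M1 i j)\<^sup>2) + 2 * (\<Sum>i<n. \<Sum>j<n. M1 i j * (u i * w j)) + (\<Sum>i<n. \<Sum>j<n. (u i * w j)\<^sup>2)"
        by (simp add: sum.distrib sum_distrib_left)
      finally show ?thesis using cross sq2 by simp
    qed
    have CS: "(\<Sum>i<n. u i * w i)\<^sup>2 \<le> (\<Sum>j<n. (w j)\<^sup>2)"
      using Cauchy_Schwarz_ineq_sum[of u w "{..<n}"] uu by simp
    have "(\<Sum>i<n. M i i)\<^sup>2 \<le> (real m + 1) * ((\<Sum>i<n. \<Sum>j<n. (M1 i j)\<^sup>2) + (\<Sum>j<n. (w j)\<^sup>2))"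
      unfolding trM by (rule comb_ineq[OF IH CS]) (auto intro!: sum_nonneg)
    thus ?thesis using goal_eq normM by (simp add: add.commute)
  qed
qed




lemma char_poly_factor:
  fixes A P Q :: "'a::field mat" and c :: 'a
  assumes A: "A \<in> carrier_mat n n" and P: "P \<in> carrier_mat n m" and Q: "Q \<in> carrier_mat m n"
    and eq: "A + c \<cdot>\<^sub>m 1\<^sub>m n = P * Q" and mn: "m \<le> n"
  shows "[:c, 1:] ^ (n - m) dvd char_poly A"
proof -
  define L where "L = [:c, 1:]"
  define P' where "P' = map_mat (\<lambda>a. [:a:]) P"
  define Q' where "Q' = map_mat (\<lambda>a. [:a:]) Q"
  have P': "P' \<in> carrier_mat n m" and Q': "Q' \<in> carrier_mat m n"
    using P Q by (auto simp: P'_def Q'_def)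
  have PQ: "P' * Q' = map_mat (\<lambda>a. [:a:]) (P * Q)"
    using map_poly_mult(1)[OF P Q] by (simp add: P'_def Q'_def)
  have QP': "Q' * P' \<in> carrier_mat m m" using P' Q' by auto
  have cm: "char_poly_matrix A = L \<cdot>\<^sub>m 1\<^sub>m n - P' * Q'"
  proof (rule eq_matI)
    fix i j assume "i < dim_row (L \<cdot>\<^sub>m 1\<^sub>m n - P' * Q')" "j < dim_col (L \<cdot>\<^sub>m 1\<^sub>m n - P' * Q')"
    hence ij: "i < n" "j < n" using P' Q' by auto
    have "(P * Q) $$ (i,j) = (A + c \<cdot>\<^sub>m 1\<^sub>m n) $$ (i,j)" using eq by simp
    also have "\<dots> = A $$ (i,j) + (if i = j then c else 0)" using ij A by simp
    finally have e: "(P * Q) $$ (i,j) = A $$ (i,j) + (if i = j then c else 0)" .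
    show "char_poly_matrix A $$ (i,j) = (L \<cdot>\<^sub>m 1\<^sub>m n - P' * Q') $$ (i,j)"
      using ij A P Q P' Q' e by (auto simp: char_poly_matrix_def PQ L_def)
  qed (insert A P' Q', auto simp: char_poly_matrix_def)
  have QQ: "Q' + - Q' = 0\<^sub>m m n" "- P' + P' = 0\<^sub>m n m" using P' Q' by (auto intro!: eq_matI)
  have a1: "L \<cdot>\<^sub>m 1\<^sub>m n + - (P' * Q') = L \<cdot>\<^sub>m 1\<^sub>m n - P' * Q'"
    by (rule add_uminus_minus_mat[of _ n n]) (use P' Q' in auto)
  have a2: "- (Q' * P') + L \<cdot>\<^sub>m 1\<^sub>m m = L \<cdot>\<^sub>m 1\<^sub>m m - Q' * P'"
    using P' Q' by (auto intro!: eq_matI)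
  have a3: "- (L \<cdot>\<^sub>m 1\<^sub>m n * P') + P' * (L \<cdot>\<^sub>m 1\<^sub>m m) = 0\<^sub>m n m"
    using P' by (simp add: mult_smult_assoc_mat[OF one_carrier_mat P'] mult_smult_distrib[OF P' one_carrier_mat])
  define Big where "Big = four_block_mat (L \<cdot>\<^sub>m 1\<^sub>m n) P' Q' (1\<^sub>m m)"
  define Lo where "Lo = four_block_mat (1\<^sub>m n) (0\<^sub>m n m) (- Q') (1\<^sub>m m)"
  define Ro where "Ro = four_block_mat (1\<^sub>m n) (- P') (0\<^sub>m m n) (L \<cdot>\<^sub>m 1\<^sub>m m)"
  have Big: "Big \<in> carrier_mat (n+m) (n+m)" unfolding Big_def by (rule four_block_carrier_mat) auto
  have Lo: "Lo \<in> carrier_mat (n+m) (n+m)" unfolding Lo_def by (rule four_block_carrier_mat) auto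
  have Ro: "Ro \<in> carrier_mat (n+m) (n+m)" unfolding Ro_def by (rule four_block_carrier_mat) auto
  have BL: "Big * Lo = four_block_mat (L \<cdot>\<^sub>m 1\<^sub>m n - P' * Q') P' (0\<^sub>m m n) (1\<^sub>m m)"
    unfolding Big_def Lo_def
    apply (subst mult_four_block_mat[OF smult_carrier_mat[OF one_carrier_mat] P' Q' one_carrier_mat
        one_carrier_mat zero_carrier_mat uminus_carrier_mat[OF Q'] one_carrier_mat])
    using P' Q' QQ a1 a2 a3 apply (simp)
    done
  have BR: "Big * Ro = four_block_mat (L \<cdot>\<^sub>m 1\<^sub>m n) (0\<^sub>m n m) Q' (L \<cdot>\<^sub>m 1\<^sub>m m - Q' * P')"
    unfolding Big_def Ro_def
    apply (subst mult_four_block_mat[OF smult_carrier_mat[OF one_carrier_mat] P' Q' one_carrier_mat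
        one_carrier_mat uminus_carrier_mat[OF P'] zero_carrier_mat smult_carrier_mat[OF one_carrier_mat]])
    using P' Q' QQ a1 a2 a3 apply (simp)
    done
  have dLo: "det Lo = 1" unfolding Lo_def
    by (subst det_four_block_mat_upper_right_zero[of _ n _ m]) (use Q' in auto)
  have dRo: "det Ro = L ^ m" unfolding Ro_def
    by (subst det_four_block_mat_lower_left_zero[of _ n _ m]) (use P' in auto)
  have d1: "det Big = char_poly A"
  proof -
    have "det (Big * Lo) = det Big * det Lo" by (rule det_mult[OF Big Lo])
    also have "det (Big * Lo) = det (L \<cdot>\<^sub>m 1\<^sub>m n - P' * Q')"
      unfolding BL by (subst det_four_block_mat_lower_left_zero[of _ n _ m]) (use P' Q' in auto)
    finally show ?thesis using dLo cm by (simp add: char_poly_def)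
  qed
  have d2: "det Big * L ^ m = L ^ n * det (L \<cdot>\<^sub>m 1\<^sub>m m - Q' * P')"
  proof -
    have "det (Big * Ro) = det Big * det Ro" by (rule det_mult[OF Big Ro])
    also have "det (Big * Ro) = L ^ n * det (L \<cdot>\<^sub>m 1\<^sub>m m - Q' * P')"
      unfolding BR by (subst det_four_block_mat_upper_right_zero[of _ n _ m]) (use P' Q' in auto)
    finally show ?thesis using dRo by simp
  qed
  define D where "D = det (L \<cdot>\<^sub>m 1\<^sub>m m - Q' * P')"
  have "L ^ m * char_poly A = L ^ m * (L ^ (n - m) * D)"
    using d1 d2 mn unfolding D_def by (simp add: mult_ac flip: power_add)
  moreover have "L ^ m \<noteq> 0" unfolding L_def by simp
  ultimately have "char_poly A = L ^ (n - m) * D" by (metis mult_left_cancel)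
  thus ?thesis unfolding L_def by simp
qed



lemma sum_skip_index:
  fixes g :: "nat \<Rightarrow> 'a::ab_group_add"
  assumes "i < Suc m"
  shows "(\<Sum>j<m. g (if j < i then j else Suc j)) = (\<Sum>j<Suc m. g j) - g i"
proof -
  define f where "f j = (if j < i then j else Suc j)" for j
  have inj: "inj_on f {..<m}" unfolding f_def inj_on_def by auto
  have img: "f ` {..<m} = {..<Suc m} - {i}"
  proof
    show "f ` {..<m} \<subseteq> {..<Suc m} - {i}" unfolding f_def by auto
    show "{..<Suc m} - {i} \<subseteq> f ` {..<m}"
    proof
      fix y assume y: "y \<in> {..<Suc m} - {i}"
      show "y \<in> f ` {..<m}"
      proof (cases "y < i")
        case True thus ?thesis using y assms unfolding f_def by (intro image_eqI[of _ _ y]) auto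
      next
        case False thus ?thesis using y unfolding f_def by (intro image_eqI[of _ _ "y - 1"]) auto
      qed
    qed
  qed
  have "(\<Sum>j<m. g (f j)) = sum g (f ` {..<m})" by (rule sum.reindex[OF inj, symmetric, unfolded comp_def])
  also have "\<dots> = sum g ({..<Suc m} - {i})" by (simp add: img)
  also have "\<dots> = (\<Sum>j<Suc m. g j) - g i" using assms by (simp add: sum_diff1)
  finally show ?thesis unfolding f_def .
qed

lemma char_poly_coeff_trace:
  fixes A :: "int mat"
  assumes "A \<in> carrier_mat (Suc n) (Suc n)"
  shows "coeff (char_poly A) n = - (\<Sum>i<Suc n. A $$ (i,i))"
  using assms
proof (induction n arbitrary: A)
  case 0
  have ut: "upper_triangular A" using 0 by (auto simp: upper_triangular_def)
  have "diag_mat A = [A $$ (0,0)]" using 0 by (auto simp: diag_mat_def)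
  then show ?case using char_poly_upper_triangular[OF 0 ut] by simp
next
  case (Suc n)
  have A: "A \<in> carrier_mat (Suc (Suc n)) (Suc (Suc n))" by fact
  let ?tr = "\<Sum>i<Suc (Suc n). A $$ (i,i)"
  have del: "mat_delete A i i \<in> carrier_mat (Suc n) (Suc n)" for i
    using mat_delete_carrier[OF A] by simp
  have trdel: "(\<Sum>j<Suc n. mat_delete A i i $$ (j,j)) = ?tr - A $$ (i,i)" if i: "i < Suc (Suc n)" for i
  proof -
    have "(\<Sum>j<Suc n. mat_delete A i i $$ (j,j)) = (\<Sum>j<Suc n. A $$ (if j < i then j else Suc j, if j < i then j else Suc j))"
      using A by (intro sum.cong) (auto simp: mat_delete_def)
    also have "\<dots> = ?tr - A $$ (i,i)"
      by (rule sum_skip_index[where g = "\<lambda>j. A $$ (j,j)", OF i])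
    finally show ?thesis .
  qed
  have "coeff (pderiv (char_poly A)) n = of_nat (Suc n) * coeff (char_poly A) (Suc n)"
    by (simp add: coeff_pderiv)
  also have "pderiv (char_poly A) = (\<Sum>i<Suc (Suc n). char_poly (mat_delete A i i))"
    by (rule pderiv_char_poly[OF A])
  finally have "of_nat (Suc n) * coeff (char_poly A) (Suc n) = (\<Sum>i<Suc (Suc n). coeff (char_poly (mat_delete A i i)) n)"
    by (simp add: coeff_sum)
  also have "\<dots> = (\<Sum>i<Suc (Suc n). - (?tr - A $$ (i,i)))"
  proof (intro sum.cong refl)
    fix i assume i: "i \<in> {..<Suc (Suc n)}"
    show "coeff (char_poly (mat_delete A i i)) n = - (?tr - A $$ (i,i))"
      by (subst Suc.IH[OF del], subst trdel) (use i in auto)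
  qed
  also have "\<dots> = - (of_nat (Suc (Suc n)) * ?tr - ?tr)"
    by (simp add: sum_subtractf)
  also have "\<dots> = of_nat (Suc n) * (- ?tr)" by (simp add: algebra_simps)
  finally show ?case by simp
qed



interpretation rat_real_poly: map_poly_inj_idom_hom "of_rat :: rat \<Rightarrow> real" ..

abbreviation rp :: "rat poly \<Rightarrow> real poly" where "rp \<equiv> map_poly of_rat"

definition minp :: "real \<Rightarrow> rat poly" where
  "minp \<mu> = (SOME p. p \<noteq> 0 \<and> lead_coeff p = 1 \<and> poly (rp p) \<mu> = 0 \<and>
      (\<forall>q. q \<noteq> 0 \<and> poly (rp q) \<mu> = 0 \<longrightarrow> degree p \<le> degree q))"

lemma minp_ex:
  assumes "q0 \<noteq> 0" "poly (rp q0) \<mu> = 0"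
  shows "\<exists>p. p \<noteq> 0 \<and> lead_coeff p = 1 \<and> poly (rp p) \<mu> = 0 \<and>
      (\<forall>q. q \<noteq> 0 \<and> poly (rp q) \<mu> = 0 \<longrightarrow> degree p \<le> degree q)"
proof -
  define P where "P d = (\<exists>q. q \<noteq> 0 \<and> poly (rp q) \<mu> = 0 \<and> degree q = d)" for d
  have "P (degree q0)" using assms unfolding P_def by blast
  hence "P (LEAST d. P d)" by (rule LeastI)
  then obtain q where q: "q \<noteq> 0" "poly (rp q) \<mu> = 0" "degree q = (LEAST d. P d)"
    unfolding P_def by blast
  define p where "p = Polynomial.smult (inverse (lead_coeff q)) q"
  have "p \<noteq> 0" using q by (simp add: p_def flip: q(3))
  moreover have "lead_coeff p = 1"
  proof -
    have lq: "lead_coeff q \<noteq> 0" using q(1) by simp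
    show ?thesis unfolding p_def using lq by (simp add: lead_coeff_smult)
  qed
  moreover have "poly (rp p) \<mu> = 0"
  proof -
    have e: "[:inverse (lead_coeff q):] * q = p" by (simp add: p_def)
    have "rp p = rp [:inverse (lead_coeff q):] * rp q" by (simp only: e[symmetric] rat_real_poly.hom_mult)
    thus ?thesis using q by simp
  qed
  moreover have "degree p \<le> degree q'" if "q' \<noteq> 0 \<and> poly (rp q') \<mu> = 0" for q'
  proof -
    have "P (degree q')" using that unfolding P_def by blast
    hence "(LEAST d. P d) \<le> degree q'" by (rule Least_le)
    thus ?thesis using q by (simp add: p_def)
  qed
  ultimately show ?thesis by blast
qed

lemma minp:
  assumes "q0 \<noteq> 0" "poly (rp q0) \<mu> = 0"
  shows "minp \<mu> \<noteq> 0" "lead_coeff (minp \<mu>) = 1" "poly (rp (minp \<mu>)) \<mu> = 0"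
    "\<And>q. q \<noteq> 0 \<Longrightarrow> poly (rp q) \<mu> = 0 \<Longrightarrow> degree (minp \<mu>) \<le> degree q"
  using someI_ex[OF minp_ex[OF assms]] unfolding minp_def[symmetric] by blast+

lemma minp_dvd:
  assumes "q0 \<noteq> 0" "poly (rp q0) \<mu> = 0" and "poly (rp q) \<mu> = 0"
  shows "minp \<mu> dvd q"
proof -
  let ?p = "minp \<mu>"
  note m = minp[OF assms(1,2)]
  have "q = ?p * (q div ?p) + q mod ?p" by simp
  hence "rp (q mod ?p) = rp q - rp ?p * rp (q div ?p)"
    by (metis add_diff_cancel_left' rat_real_poly.hom_add rat_real_poly.hom_mult)
  hence root: "poly (rp (q mod ?p)) \<mu> = 0" using m(3) assms(3) by simp
  show ?thesis
  proof (rule ccontr)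
    assume "\<not> ?p dvd q"
    hence nz: "q mod ?p \<noteq> 0" by (simp add: mod_eq_0_iff_dvd)
    have "degree (q mod ?p) < degree ?p" using degree_mod_less'[OF m(1) nz] .
    moreover have "degree ?p \<le> degree (q mod ?p)" by (rule m(4)[OF nz root])
    ultimately show False by simp
  qed
qed

lemma minp_order1:
  assumes "q0 \<noteq> 0" "poly (rp q0) \<mu> = 0"
  shows "order \<mu> (rp (minp \<mu>)) = 1"
proof -
  let ?p = "minp \<mu>"
  note m = minp[OF assms]
  have dp: "degree ?p \<noteq> 0"
  proof
    assume "degree ?p = 0"
    then obtain c where "?p = [:c:]" by (meson degree_eq_zeroE)
    with m(1,2,3) show False by simp
  qed
  have nz: "rp ?p \<noteq> 0" using m(1) by simp
  have d: "pderiv ?p \<noteq> 0" using dp by (simp add: pderiv_eq_0_iff)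
  have "poly (rp (pderiv ?p)) \<mu> \<noteq> 0"
  proof
    assume "poly (rp (pderiv ?p)) \<mu> = 0"
    from m(4)[OF d this] have "degree ?p \<le> degree (pderiv ?p)" .
    thus False using dp by (simp add: degree_pderiv)
  qed
  hence "order \<mu> (pderiv (rp ?p)) = 0"
    by (simp add: order_root of_rat_hom.map_poly_pderiv)
  moreover have "order \<mu> (rp ?p) = Suc (order \<mu> (pderiv (rp ?p)))"
    by (rule order_pderiv[OF nz]) (use m(3) in simp)
  ultimately show ?thesis by simp
qed

lemma minp_power_dvd:
  assumes "q0 \<noteq> 0" "poly (rp q0) \<mu> = 0"
  shows "q \<noteq> 0 \<Longrightarrow> j \<le> order \<mu> (rp q) \<Longrightarrow> minp \<mu> ^ j dvd q"
proof (induction j arbitrary: q)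
  case 0 thus ?case by simp
next
  case (Suc j)
  let ?p = "minp \<mu>"
  have rq: "rp q \<noteq> 0" using Suc.prems by simp
  have "poly (rp q) \<mu> = 0" using Suc.prems rq by (simp add: order_root)
  from minp_dvd[OF assms this] obtain q1 where q1: "q = ?p * q1" by blast
  have q1nz: "q1 \<noteq> 0" using Suc.prems q1 by auto
  have "order \<mu> (rp q) = order \<mu> (rp ?p) + order \<mu> (rp q1)"
    unfolding q1 rat_real_poly.hom_mult by (rule order_mult) (use rq q1 in simp)
  hence "j \<le> order \<mu> (rp q1)" using Suc.prems minp_order1[OF assms] by simp
  from Suc.IH[OF q1nz this] have "?p ^ j dvd q1" .
  thus ?case unfolding q1 by simp
qed

lemma core:
  fixes cp :: "int poly" and \<mu> :: real
  assumes lc: "lead_coeff cp = 1" and dg: "degree cp = n"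
    and dv: "[:-\<mu>, 1:] ^ g dvd map_poly of_int cp" and g1: "g \<ge> 1" and n2g: "n \<le> 2 * g"
    and nr: "\<mu> \<notin> \<rat>"
  shows "(map_poly of_int cp :: rat poly) = minp \<mu> ^ g"
proof -
  define cq :: "rat poly" where "cq = map_poly of_int cp"
  have rpc: "rp cq = map_poly of_int cp"
    unfolding cq_def by (subst map_poly_map_poly) (auto simp: comp_def)
  have cq0: "cq \<noteq> 0" using lc unfolding cq_def by auto
  have rc0: "rp cq \<noteq> 0" using cq0 by simp
  have "[:-\<mu>, 1:] dvd map_poly of_int cp"
    using dv g1 by (metis dvd_power dvd_trans not_one_le_zero le_0_eq neq0_conv)
  hence root: "poly (rp cq) \<mu> = 0" unfolding rpc by (simp add: poly_eq_0_iff_dvd)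
  let ?p = "minp \<mu>"
  note m = minp[OF cq0 root]
  have "g \<le> order \<mu> (rp cq)" using dv rc0 unfolding rpc[symmetric] by (simp add: order_divides)
  from minp_power_dvd[OF cq0 root cq0 this] obtain r where r: "cq = ?p ^ g * r" by blast
  have r0: "r \<noteq> 0" using r cq0 by auto
  have dp2: "degree ?p \<ge> 2"
  proof (rule ccontr)
    assume "\<not> degree ?p \<ge> 2"
    moreover have "degree ?p \<noteq> 0"
    proof
      assume "degree ?p = 0"
      then obtain c where "?p = [:c:]" by (meson degree_eq_zeroE)
      with m(1,2,3) show False by simp
    qed
    ultimately have d1: "degree ?p = 1" by simp
    have pe: "?p = [:coeff ?p 0, 1:]"
    proof (rule poly_eqI)
      fix i show "coeff ?p i = coeff [:coeff ?p 0, 1:] i"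
        using m(2) d1 by (cases i) (auto simp: coeff_pCons coeff_eq_0 split: nat.split)
    qed
    have "poly (rp [:coeff ?p 0, 1:]) \<mu> = 0" using m(3) pe by metis
    hence "\<mu> = - of_rat (coeff ?p 0)" by simp
    thus False using nr by (metis Rats_minus_iff Rats_of_rat)
  qed
  have "degree cq = n" unfolding cq_def using dg by (simp add: degree_map_poly)
  also have "degree cq = g * degree ?p + degree r"
    unfolding r using m(1) r0 by (simp add: degree_mult_eq degree_power_eq)
  finally have "g * degree ?p + degree r = n" .
  moreover have "g * 2 \<le> g * degree ?p" using dp2 by simp
  ultimately have "degree r = 0" using n2g by linarith
  then obtain c where rc: "r = [:c:]" by (meson degree_eq_zeroE)
  have "lead_coeff cq = 1" unfolding cq_def using lc by (simp add: degree_map_poly)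
  also have "lead_coeff cq = c" unfolding r rc using m(2) by (simp add: lead_coeff_power lead_coeff_mult)
  finally show ?thesis using r rc unfolding cq_def by simp
qed




lemma integrality:
  fixes A A2 :: "int mat" and k :: real
  assumes A: "A \<in> carrier_mat n n" and A2: "A2 \<in> carrier_mat n n"
    and d1: "[:k,1:]^g dvd char_poly (map_mat of_int A :: real mat)"
    and d2: "[:k,1:]^g dvd char_poly (map_mat of_int A2 :: real mat)"
    and tr: "(\<Sum>i<n. A$$(i,i)) \<noteq> (\<Sum>i<n. A2$$(i,i))"
    and g1: "g \<ge> 1" and n2g: "n \<le> 2*g"
  shows "k \<in> \<int>"
proof -
  have cA: "char_poly (map_mat of_int A :: real mat) = of_int_poly (char_poly A)"
    by (rule of_int_hom.char_poly_hom[OF A])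
  have cA2: "char_poly (map_mat of_int A2 :: real mat) = of_int_poly (char_poly A2)"
    by (rule of_int_hom.char_poly_hom[OF A2])
  have kk: "[:k,1:] = [:-(-k), 1:]" by simp
  obtain n' where n': "n = Suc n'" using tr by (cases n) auto
  have mA: "degree (char_poly A) = n" "lead_coeff (char_poly A) = 1"
    using degree_monic_char_poly[OF A] by auto
  have mA2: "degree (char_poly A2) = n" "lead_coeff (char_poly A2) = 1"
    using degree_monic_char_poly[OF A2] by auto
  show ?thesis
  proof (cases "-k \<in> \<rat>")
    case False
    have e1: "(of_int_poly (char_poly A) :: rat poly) = minp (-k) ^ g"
      by (rule core[OF mA(2) mA(1) _ g1 n2g False]) (use d1 cA kk in metis)
    have e2: "(of_int_poly (char_poly A2) :: rat poly) = minp (-k) ^ g"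
      by (rule core[OF mA2(2) mA2(1) _ g1 n2g False]) (use d2 cA2 kk in metis)
    have "char_poly A = char_poly A2" using e1 e2 of_int_poly_hom.eq_iff by metis
    hence "coeff (char_poly A) n' = coeff (char_poly A2) n'" by simp
    thus ?thesis using char_poly_coeff_trace[of A n'] char_poly_coeff_trace[of A2 n'] A A2 tr n' by simp
  next
    case True
    have "[:k,1:] dvd of_int_poly (char_poly A)"
      using d1 cA g1 by (metis dvd_power dvd_trans not_one_le_zero neq0_conv)
    hence "poly (of_int_poly (char_poly A)) (-k) = 0" by (simp add: poly_eq_0_iff_dvd)
    hence "algebraic_int (-k)" using mA(2) algebraic_int_altdef_ipoly by blast
    from rational_algebraic_int_is_int[OF this True] show ?thesis by (metis Ints_minus minus_minus)
  qed
qed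



definition MSz :: "nat \<Rightarrow> 'a::euclidean_space multiset set" where
  "MSz m = multisets_of_size Basis m"

definition mon :: "'a::euclidean_space multiset \<Rightarrow> 'a \<Rightarrow> real" where
  "mon M x = prod_mset (image_mset (\<lambda>b. x \<bullet> b) M)"

definition inmon :: "nat \<Rightarrow> ('a::euclidean_space \<Rightarrow> real) \<Rightarrow> bool" where
  "inmon m f \<longleftrightarrow> (\<exists>c. \<forall>x. f x = (\<Sum>M\<in>MSz m. c M * mon M x))"

lemma finite_MSz: "finite (MSz m)"
  unfolding MSz_def by (rule finite_multisets_of_size) simp

lemma inmon_0: "inmon 0 (\<lambda>x::'a::euclidean_space. 1)"
proof -
  have e: "(MSz 0 :: 'a multiset set) = {{#}}" unfolding MSz_def multisets_of_size_def by auto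
  show ?thesis unfolding inmon_def by (intro exI[of _ "\<lambda>_. 1"]) (simp add: mon_def e)
qed

lemma inmon_zero: "inmon m (\<lambda>x. 0)"
  unfolding inmon_def by (intro exI[of _ "\<lambda>_. 0"]) simp

lemma inmon_add: "inmon m f \<Longrightarrow> inmon m g \<Longrightarrow> inmon m (\<lambda>x. f x + g x)"
  unfolding inmon_def
proof (elim exE)
  fix c d assume c: "\<forall>x. f x = (\<Sum>M\<in>MSz m. c M * mon M x)" and d: "\<forall>x. g x = (\<Sum>M\<in>MSz m. d M * mon M x)"
  show "\<exists>e. \<forall>x. f x + g x = (\<Sum>M\<in>MSz m. e M * mon M x)"
    by (intro exI[of _ "\<lambda>M. c M + d M"]) (simp add: c d distrib_right sum.distrib)
qed

lemma inmon_scale: "inmon m f \<Longrightarrow> inmon m (\<lambda>x. a * f x)"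
  unfolding inmon_def
proof (elim exE)
  fix c assume c: "\<forall>x. f x = (\<Sum>M\<in>MSz m. c M * mon M x)"
  show "\<exists>e. \<forall>x. a * f x = (\<Sum>M\<in>MSz m. e M * mon M x)"
    by (intro exI[of _ "\<lambda>M. a * c M"]) (simp add: c sum_distrib_left mult.assoc)
qed

lemma inmon_sum: "finite I \<Longrightarrow> (\<And>i. i \<in> I \<Longrightarrow> inmon m (f i)) \<Longrightarrow> inmon m (\<lambda>x. \<Sum>i\<in>I. f i x)"
proof (induction I rule: finite_induct)
  case empty thus ?case by (simp add: inmon_zero)
next
  case (insert a I)
  thus ?case using inmon_add[of m "f a" "\<lambda>x. \<Sum>i\<in>I. f i x"] by simp
qed

lemma mon_add: "mon (add_mset b M) x = (x \<bullet> b) * mon M x"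
  by (simp add: mon_def)

lemma inmon_basis:
  assumes b: "b \<in> Basis" and f: "inmon m f"
  shows "inmon (Suc m) (\<lambda>x. (x \<bullet> b) * f x)"
proof -
  from f obtain c where c: "\<And>x. f x = (\<Sum>M\<in>MSz m. c M * mon M x)" unfolding inmon_def by blast
  define c' where "c' M' = (if M' \<in> add_mset b ` MSz m then c (M' - {#b#}) else 0)" for M'
  have sub: "add_mset b ` MSz m \<subseteq> MSz (Suc m)" using b unfolding MSz_def multisets_of_size_def by auto
  have "(x \<bullet> b) * f x = (\<Sum>M'\<in>MSz (Suc m). c' M' * mon M' x)" for x
  proof -
    have "(x \<bullet> b) * f x = (\<Sum>M\<in>MSz m. c M * mon (add_mset b M) x)"
      by (simp add: c sum_distrib_left mon_add mult_ac)
    also have "\<dots> = (\<Sum>M'\<in>add_mset b ` MSz m. c (M' - {#b#}) * mon M' x)"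
      by (subst sum.reindex) (auto simp: inj_on_def)
    also have "\<dots> = (\<Sum>M'\<in>add_mset b ` MSz m. c' M' * mon M' x)"
      by (intro sum.cong) (auto simp: c'_def)
    also have "\<dots> = (\<Sum>M'\<in>MSz (Suc m). c' M' * mon M' x)"
      by (rule sum.mono_neutral_left[OF finite_MSz sub]) (auto simp: c'_def)
    finally show ?thesis .
  qed
  thus ?thesis unfolding inmon_def by blast
qed

lemma inmon_lin:
  assumes f: "inmon m f"
  shows "inmon (Suc m) (\<lambda>x. (x \<bullet> v) * f x)"
proof -
  have e: "(x \<bullet> v) * f x = (\<Sum>b\<in>Basis. (v \<bullet> b) * ((x \<bullet> b) * f x))" for x
    by (subst euclidean_inner) (simp add: sum_distrib_right sum_distrib_left mult_ac)
  have "inmon (Suc m) (\<lambda>x. \<Sum>b\<in>Basis. (v \<bullet> b) * ((x \<bullet> b) * f x))"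
    by (rule inmon_sum) (auto intro!: inmon_scale inmon_basis f)
  thus ?thesis by (simp only: e)
qed

lemma inmon_sq:
  assumes f: "inmon m f"
  shows "inmon (Suc (Suc m)) (\<lambda>x. (x \<bullet> x) * f x)"
proof -
  have e: "(x \<bullet> x) * f x = (\<Sum>b\<in>Basis. (x \<bullet> b) * ((x \<bullet> b) * f x))" for x
    by (subst euclidean_inner) (simp add: sum_distrib_right sum_distrib_left mult_ac)
  have "inmon (Suc (Suc m)) (\<lambda>x. \<Sum>b\<in>Basis. (x \<bullet> b) * ((x \<bullet> b) * f x))"
    by (rule inmon_sum) (auto intro!: inmon_basis f)
  thus ?thesis by (simp only: e)
qed

lemma inmon_pow: "inmon (j + 2 * i) (\<lambda>x. (x \<bullet> y) ^ j * (x \<bullet> x) ^ i)"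
proof (induction i)
  case 0
  show ?case
  proof (induction j)
    case 0 thus ?case using inmon_0 by simp
  next
    case (Suc j)
    from inmon_lin[OF Suc, of y] show ?case by (simp add: mult_ac)
  qed
next
  case (Suc i)
  from inmon_sq[OF Suc] show ?case by (simp add: mult_ac)
qed




definition TT :: "nat \<Rightarrow> 'a::euclidean_space multiset set" where
  "TT s = MSz (s-1) \<union> MSz (s-2)"

definition inmon2 :: "nat \<Rightarrow> ('a::euclidean_space \<Rightarrow> real) \<Rightarrow> bool" where
  "inmon2 s f \<longleftrightarrow> (\<exists>c. \<forall>x. norm x = 1 \<longrightarrow> f x = (\<Sum>M\<in>TT s. c M * mon M x))"

lemma finite_TT: "finite (TT s)"
  unfolding TT_def by (simp add: finite_MSz)

lemma card_TT: "card (TT s :: 'a::euclidean_space multiset set) \<le>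
   (DIM('a) + (s-1) - 1 choose (s-1)) + (DIM('a) + (s-2) - 1 choose (s-2))"
proof -
  have "card (TT s :: 'a multiset set) \<le> card (MSz (s-1) :: 'a multiset set) + card (MSz (s-2) :: 'a multiset set)"
    unfolding TT_def by (rule card_Un_le)
  thus ?thesis unfolding MSz_def by (simp add: card_multisets_of_size)
qed

lemma inmon2_of:
  assumes m: "m = s - 1 \<or> m = s - 2" and g: "inmon m g" and fg: "\<And>x. norm x = 1 \<Longrightarrow> f x = g x"
  shows "inmon2 s f"
proof -
  from g obtain c where c: "\<And>x. g x = (\<Sum>M\<in>MSz m. c M * mon M x)" unfolding inmon_def by blast
  define c' where "c' M = (if M \<in> MSz m then c M else 0)" for M
  have sub: "MSz m \<subseteq> TT s" using m unfolding TT_def by auto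
  have "g x = (\<Sum>M\<in>TT s. c' M * mon M x)" for x
  proof -
    have "g x = (\<Sum>M\<in>MSz m. c' M * mon M x)" unfolding c by (intro sum.cong) (auto simp: c'_def)
    also have "\<dots> = (\<Sum>M\<in>TT s. c' M * mon M x)"
      by (rule sum.mono_neutral_left[OF finite_TT sub]) (auto simp: c'_def)
    finally show ?thesis .
  qed
  thus ?thesis unfolding inmon2_def using fg by metis
qed

lemma inmon2_add: "inmon2 s f \<Longrightarrow> inmon2 s g \<Longrightarrow> inmon2 s (\<lambda>x. f x + g x)"
  unfolding inmon2_def
proof (elim exE)
  fix c d assume c: "\<forall>x. norm x = 1 \<longrightarrow> f x = (\<Sum>M\<in>TT s. c M * mon M x)"
    and d: "\<forall>x. norm x = 1 \<longrightarrow> g x = (\<Sum>M\<in>TT s. d M * mon M x)"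
  show "\<exists>e. \<forall>x. norm x = 1 \<longrightarrow> f x + g x = (\<Sum>M\<in>TT s. e M * mon M x)"
    by (intro exI[of _ "\<lambda>M. c M + d M"]) (simp add: c d distrib_right sum.distrib)
qed

lemma inmon2_scale: "inmon2 s f \<Longrightarrow> inmon2 s (\<lambda>x. a * f x)"
  unfolding inmon2_def
proof (elim exE)
  fix c assume c: "\<forall>x. norm x = 1 \<longrightarrow> f x = (\<Sum>M\<in>TT s. c M * mon M x)"
  show "\<exists>e. \<forall>x. norm x = 1 \<longrightarrow> a * f x = (\<Sum>M\<in>TT s. e M * mon M x)"
    by (intro exI[of _ "\<lambda>M. a * c M"]) (simp add: c sum_distrib_left mult.assoc)
qed

lemma inmon2_zero: "inmon2 s (\<lambda>x. 0)"
  unfolding inmon2_def by (intro exI[of _ "\<lambda>_. 0"]) simp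

lemma inmon2_sum: "finite I \<Longrightarrow> (\<And>i. i \<in> I \<Longrightarrow> inmon2 s (f i)) \<Longrightarrow> inmon2 s (\<lambda>x. \<Sum>i\<in>I. f i x)"
proof (induction I rule: finite_induct)
  case empty thus ?case by (simp add: inmon2_zero)
next
  case (insert a I)
  thus ?case using inmon2_add[of s "f a" "\<lambda>x. \<Sum>i\<in>I. f i x"] by simp
qed

lemma inmon2_pow:
  fixes y :: "'a::euclidean_space"
  assumes s: "s \<ge> 2" and j: "j \<le> s - 1"
  shows "inmon2 s (\<lambda>x::'a. (x \<bullet> y) ^ j)"
proof -
  define m where "m = (if even (s - 1 - j) then s - 1 else s - 2)"
  have jm: "j \<le> m" and ev: "even (m - j)" using s j unfolding m_def by (auto, presburger+)
  define i where "i = (m - j) div 2"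
  have mi: "m = j + 2 * i" using jm ev unfolding i_def by auto
  show ?thesis
  proof (rule inmon2_of[of m s])
    show "m = s - 1 \<or> m = s - 2" unfolding m_def by auto
    show "inmon m (\<lambda>x. (x \<bullet> y) ^ j * (x \<bullet> x) ^ i)" unfolding mi by (rule inmon_pow)
    fix x :: 'a assume "norm x = 1"
    hence "x \<bullet> x = 1" by (metis norm_eq_1)
    thus "(x \<bullet> y) ^ j = (x \<bullet> y) ^ j * (x \<bullet> x) ^ i" by simp
  qed
qed

lemma inmon2_poly:
  fixes y :: "'a::euclidean_space"
  assumes s: "s \<ge> 2" and d: "degree P \<le> s - 1"
  shows "inmon2 s (\<lambda>x::'a. poly P (x \<bullet> y))"
proof -
  have "inmon2 s (\<lambda>x::'a. \<Sum>i\<le>degree P. coeff P i * (x \<bullet> y) ^ i)"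
    by (rule inmon2_sum) (use s d in \<open>auto intro!: inmon2_scale inmon2_pow\<close>)
  thus ?thesis by (simp add: poly_altdef)
qed

lemma inmon2_one:
  assumes s: "s \<ge> 2"
  shows "inmon2 s (\<lambda>x::'a::euclidean_space. 1)"
  using inmon2_pow[OF s, of 0 0] by simp




lemma final_arith:
  fixes k :: real and n m N :: nat
  assumes kZ: "k \<in> \<int>" and mN: "m \<le> N" and nN: "2 * N \<le> n" and N1: "N \<ge> 1"
    and tb: "(real n * (k - 1/2))\<^sup>2 \<le> real m * (real n * ((k - 1/2)\<^sup>2 + (real n - 1) / 4))"
  shows "\<bar>k\<bar> \<le> real_of_int \<lfloor>1/2 + sqrt ((real N)^2 / (2 * real N - 2) + 1/4)\<rfloor>"
proof -
  define a where "a = (k - 1/2)\<^sup>2"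
  have a0: "a \<ge> 0" unfolding a_def by simp
  have n0: "real n > 0" using nN N1 by simp
  have "real n * (real n * a) \<le> real n * (real m * (a + (real n - 1) / 4))"
    using tb unfolding a_def by (simp add: power_mult_distrib power2_eq_square algebra_simps)
  hence "real n * a \<le> real m * (a + (real n - 1) / 4)" using n0 by simp
  also have "\<dots> \<le> real N * (a + (real n - 1) / 4)"
    using mN a0 n0 by (intro mult_right_mono) auto
  finally have i0: "real n * a \<le> real N * a + real N * ((real n - 1) / 4)" by (simp add: distrib_left)
  have "a * (real n - real N) = real n * a - real N * a" by (simp add: algebra_simps)
  with i0 have i1: "a * (real n - real N) \<le> real N * (real n - 1) / 4" by simp
  have "real N * (real n - 1) / 4 \<le> (2 * real N - 1) / 4 * (real n - real N)"
  proof -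
    have "0 \<le> (real N - 1) * (real n - 2 * real N)" using N1 nN by simp
    moreover have "(2 * real N - 1) / 4 * (real n - real N) - real N * (real n - 1) / 4 = (real N - 1) * (real n - 2 * real N) / 4"
      by (simp add: field_simps)
    ultimately show ?thesis by linarith
  qed
  with i1 have "a * (real n - real N) \<le> (2 * real N - 1) / 4 * (real n - real N)" by linarith
  moreover have "real n - real N > 0" using nN N1 by simp
  ultimately have a2: "a \<le> (2 * real N - 1) / 4" by simp
  have a3: "(2 * real N - 1) / 4 \<le> (real N)^2 / (2 * real N - 2) + 1/4"
  proof (cases "N = 1")
    case True thus ?thesis by simp
  next
    case False
    hence N2: "real N \<ge> 2" using N1 by simp
    have "(real N - 1) / 2 \<le> (real N)^2 / (2 * real N - 2)"
    proof -
      have "(real N - 1) * (2 * real N - 2) \<le> 2 * (real N)^2"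
        using N2 by (simp add: power2_eq_square algebra_simps)
      thus ?thesis using N2 by (simp add: field_simps)
    qed
    thus ?thesis by (simp add: field_simps)
  qed
  have "\<bar>k\<bar> - 1/2 \<le> \<bar>k - 1/2\<bar>" by simp
  also have "\<bar>k - 1/2\<bar> = sqrt a" unfolding a_def by simp
  also have "sqrt a \<le> sqrt ((real N)^2 / (2 * real N - 2) + 1/4)"
    using a2 a3 by (intro real_sqrt_le_mono) linarith
  finally have "\<bar>k\<bar> \<le> 1/2 + sqrt ((real N)^2 / (2 * real N - 2) + 1/4)" by simp
  moreover obtain z where z: "\<bar>k\<bar> = of_int z" using kZ by (metis Ints_abs Ints_cases)
  ultimately show ?thesis by (simp add: le_floor_iff)
qed



lemma sum_distinct_list: "distinct ts \<Longrightarrow> (\<Sum>l<length ts. g (ts!l)) = sum g (set ts)"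
  by (simp add: sum_list_distinct_conv_sum_set[symmetric] sum_list_sum_nth atLeast0LessThan)

lemma sum_if_diag:
  fixes a b :: real
  assumes "i < n"
  shows "(\<Sum>j<n. if i = j then a else b) = a + (real n - 1) * b"
proof -
  have "(\<Sum>j<n. if i = j then a else b) = (\<Sum>j<n. b + (if i = j then a - b else 0))"
    by (intro sum.cong) auto
  also have "\<dots> = real n * b + (a - b)" using assms by (simp add: sum.distrib)
  finally show ?thesis by (simp add: algebra_simps)
qed

lemma sphere_inner:
  fixes x y :: "'a::euclidean_space"
  assumes "norm x = 1" "norm y = 1"
  shows "(dist x y)\<^sup>2 = 2 - 2 * (x \<bullet> y)"
proof -
  have "(dist x y)\<^sup>2 = (x - y) \<bullet> (x - y)" by (simp add: dist_norm power2_norm_eq_inner)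
  also have "\<dots> = x \<bullet> x - 2 * (x \<bullet> y) + y \<bullet> y" by (simp add: inner_diff_left inner_diff_right inner_commute)
  also have "x \<bullet> x = 1" using assms(1) by (metis norm_eq_1)
  also have "y \<bullet> y = 1" using assms(2) by (metis norm_eq_1)
  finally show ?thesis by simp
qed



theorem theorem5p1:
  fixes X :: "'a::euclidean_space set" and s :: nat
  assumes "s \<ge> 2"
    and "s_distance_set X s"
    and "X \<subseteq> sphere 0 1"
    and "card X \<ge> 2 * (((DIM('a) + s - 2) choose (s - 1)) + ((DIM('a) + s - 3) choose (s - 2)))"
  shows "\<forall>\<beta>\<in>B X.
           (\<Prod>\<gamma>\<in>B X - {\<beta>}. (1 - \<gamma>) / (\<beta> - \<gamma>)) \<in> \<int> \<and>
           \<bar>\<Prod>\<gamma>\<in>B X - {\<beta>}. (1 - \<gamma>) / (\<beta> - \<gamma>)\<bar>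
             \<le> real_of_int (U (((DIM('a) + s - 2) choose (s - 1)) + ((DIM('a) + s - 3) choose (s - 2))))"
proof
  fix \<beta> assume \<beta>: "\<beta> \<in> B X"
  note s2 = assms(1)
  define N where "N = ((DIM('a) + s - 2) choose (s - 1)) + ((DIM('a) + s - 3) choose (s - 2))"
  have finX: "finite X" using assms(2) by (simp add: s_distance_set_def)
  have cardD: "card (distances X) = s" using assms(2) by (simp add: s_distance_set_def)
  have nX: "norm x = 1" if "x \<in> X" for x using assms(3) that by auto
  have ipX: "inner x x = 1" if "x \<in> X" for x using nX[OF that] by (metis norm_eq_1)
  have finD: "finite (distances X)"
  proof -
    have "distances X \<subseteq> (\<lambda>(x,y). dist x y) ` (X \<times> X)" unfolding distances_def by auto
    thus ?thesis using finX by (meson finite_SigmaI finite_imageI finite_subset)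
  qed
  have finB: "finite (B X)"
  proof -
    have "B X \<subseteq> (\<lambda>(x,y). inner x y) ` (X \<times> X)" unfolding B_def by auto
    thus ?thesis using finX by (meson finite_SigmaI finite_imageI finite_subset)
  qed
  have cardB: "card (B X) \<le> s"
  proof -
    have "B X \<subseteq> (\<lambda>t. 1 - t\<^sup>2 / 2) ` distances X"
    proof
      fix b assume "b \<in> B X"
      then obtain x y where xy: "x \<in> X" "y \<in> X" "x \<noteq> y" "b = inner x y" unfolding B_def by auto
      have "(dist x y)\<^sup>2 = 2 - 2 * (inner x y)" by (rule sphere_inner[OF nX[OF xy(1)] nX[OF xy(2)]])
      hence "b = 1 - (dist x y)\<^sup>2 / 2" using xy(4) by (simp add: field_simps)
      moreover have "dist x y \<in> distances X" unfolding distances_def using xy by auto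
      ultimately show "b \<in> (\<lambda>t. 1 - t\<^sup>2 / 2) ` distances X" by blast
    qed
    hence "card (B X) \<le> card ((\<lambda>t. 1 - t\<^sup>2 / 2) ` distances X)" using finD by (intro card_mono) auto
    also have "\<dots> \<le> card (distances X)" by (rule card_image_le[OF finD])
    finally show ?thesis using cardD by simp
  qed
  define Bo where "Bo = B X - {\<beta>}"
  have finBo: "finite Bo" using finB by (simp add: Bo_def)
  have cardBo: "card Bo \<le> s - 1" using cardB \<beta> finB by (simp add: Bo_def card_Diff_singleton)
  define P :: "real poly" where "P = (\<Prod>\<gamma>\<in>Bo. [:-\<gamma>/(\<beta>-\<gamma>), 1/(\<beta>-\<gamma>):])"
  have polyP: "poly P t = (\<Prod>\<gamma>\<in>Bo. (t - \<gamma>)/(\<beta> - \<gamma>))" for t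
    unfolding P_def poly_prod by (intro prod.cong) (auto simp: diff_divide_distrib)
  have degP: "degree P \<le> s - 1"
  proof -
    have "degree P \<le> sum (degree \<circ> (\<lambda>\<gamma>. [:-\<gamma>/(\<beta>-\<gamma>), 1/(\<beta>-\<gamma>):])) Bo"
      unfolding P_def by (rule degree_prod_sum_le[OF finBo])
    also have "\<dots> \<le> (\<Sum>\<gamma>\<in>Bo. 1)" by (intro sum_mono) auto
    also have "\<dots> = card Bo" by simp
    finally show ?thesis using cardBo by simp
  qed
  define k where "k = (\<Prod>\<gamma>\<in>B X - {\<beta>}. (1 - \<gamma>) / (\<beta> - \<gamma>))"
  have kP: "poly P 1 = k" unfolding k_def polyP Bo_def ..
  have valP: "poly P (inner x y) = (if x = y then k else if inner x y = \<beta> then 1 else 0)"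
    if xy: "x \<in> X" "y \<in> X" for x y
  proof (cases "x = y")
    case True thus ?thesis using ipX[OF xy(1)] kP by simp
  next
    case False
    hence inB: "inner x y \<in> B X" unfolding B_def using xy by auto
    show ?thesis
    proof (cases "inner x y = \<beta>")
      case True
      have "poly P (inner x y) = (\<Prod>\<gamma>\<in>Bo. 1)" unfolding polyP True
        by (intro prod.cong) (auto simp: Bo_def)
      thus ?thesis using True False by simp
    next
      case F2: False
      have "inner x y \<in> Bo" using inB F2 by (simp add: Bo_def)
      hence "poly P (inner x y) = 0" unfolding polyP using finBo by (intro prod_zero) auto
      thus ?thesis using False F2 by simp
    qed
  qed
  obtain xs where xs: "distinct xs" "set xs = X" using finite_distinct_list[OF finX] by blast
  obtain ts :: "'a multiset list" where ts: "distinct ts" "set ts = TT s"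
    using finite_distinct_list[OF finite_TT] by blast
  define n where "n = length xs"
  define m where "m = length ts"
  have ncard: "n = card X" unfolding n_def using xs by (metis distinct_card)
  have mcard: "m = card (TT s :: 'a multiset set)" unfolding m_def using ts by (metis distinct_card)
  have mN: "m \<le> N"
  proof -
    have e1: "DIM('a) + (s - 1) - 1 = DIM('a) + s - 2" using s2 by simp
    have e2: "DIM('a) + (s - 2) - 1 = DIM('a) + s - 3" using s2 by simp
    show ?thesis using card_TT[where 'a='a, of s] unfolding mcard N_def e1 e2 .
  qed
  have N1: "N \<ge> 1"
  proof -
    have "s - 1 \<le> DIM('a) + s - 2" using s2 DIM_positive[where 'a='a] by linarith
    hence "(DIM('a) + s - 2) choose (s - 1) > 0" by simp
    thus ?thesis unfolding N_def by linarith
  qed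
  have nN: "2 * N \<le> n" using assms(4) unfolding ncard N_def .
  have xsX: "xs ! i \<in> X" if "i < n" for i using that xs unfolding n_def by auto
  have xs_inj: "xs ! i = xs ! j \<longleftrightarrow> i = j" if "i < n" "j < n" for i j
    using that xs(1) unfolding n_def by (simp add: nth_eq_iff_index_eq)
  have "\<forall>y. \<exists>c. \<forall>x::'a. norm x = 1 \<longrightarrow> poly P (inner x y) = (\<Sum>M\<in>TT s. c M * mon M x)"
    using inmon2_poly[OF s2 degP] unfolding inmon2_def by blast
  then obtain C where C: "\<And>y x. norm (x::'a) = 1 \<Longrightarrow> poly P (inner x y) = (\<Sum>M\<in>TT s. C y M * mon M x)"
    by metis
  obtain e where e: "\<And>x. norm (x::'a) = 1 \<Longrightarrow> 1 = (\<Sum>M\<in>TT s. e M * mon M x)"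
    using inmon2_one[OF s2, where 'a='a] unfolding inmon2_def by blast
  define fm where "fm l i = mon (ts!l) (xs!i)" for l i
  have E1: "poly P (inner (xs!i) (xs!j)) = (\<Sum>l<m. fm l i * C (xs!j) (ts!l))" if "i < n" for i j
  proof -
    have "poly P (inner (xs!i) (xs!j)) = (\<Sum>M\<in>TT s. C (xs!j) M * mon M (xs!i))" using C nX xsX that by blast
    also have "\<dots> = (\<Sum>l<m. C (xs!j) (ts!l) * mon (ts!l) (xs!i))"
      unfolding m_def by (subst sum_distinct_list[OF ts(1)]) (simp add: ts)
    finally show ?thesis by (simp add: fm_def mult.commute)
  qed
  have E2: "1 = (\<Sum>l<m. fm l i * e (ts!l))" if "i < n" for i
  proof -
    have "1 = (\<Sum>M\<in>TT s. e M * mon M (xs!i))" using e nX xsX that by blast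
    also have "\<dots> = (\<Sum>l<m. e (ts!l) * mon (ts!l) (xs!i))"
      unfolding m_def by (subst sum_distinct_list[OF ts(1)]) (simp add: ts)
    finally show ?thesis by (simp add: fm_def mult.commute)
  qed
  define adj where "adj i j = (if i \<noteq> j \<and> inner (xs!i) (xs!j) = \<beta> then 1 else 0 :: int)" for i j
  have valij: "poly P (inner (xs!i) (xs!j)) = of_int (adj i j) + (if i = j then k else 0)"
    if "i < n" "j < n" for i j
    using valP[OF xsX[OF that(1)] xsX[OF that(2)]] xs_inj[OF that] by (auto simp: adj_def)
  have kZ: "k \<in> \<int>"
  proof -
    define Phi :: "real mat" where "Phi = mat n m (\<lambda>(i,l). fm l i)"
    define Psi1 :: "real mat" where "Psi1 = mat m n (\<lambda>(l,j). C (xs!j) (ts!l))"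
    define Psi2 :: "real mat" where "Psi2 = mat m n (\<lambda>(l,j). C (xs!j) (ts!l) - e (ts!l))"
    define A :: "int mat" where "A = mat n n (\<lambda>(i,j). adj i j)"
    define A2 :: "int mat" where "A2 = mat n n (\<lambda>(i,j). adj i j - 1)"
    have A: "A \<in> carrier_mat n n" and A2: "A2 \<in> carrier_mat n n" by (auto simp: A_def A2_def)
    have Phi: "Phi \<in> carrier_mat n m" and Psi1: "Psi1 \<in> carrier_mat m n" and Psi2: "Psi2 \<in> carrier_mat m n"
      by (auto simp: Phi_def Psi1_def Psi2_def)
    have eq1: "map_mat of_int A + k \<cdot>\<^sub>m 1\<^sub>m n = Phi * Psi1"
    proof (rule eq_matI)
      fix i j assume "i < dim_row (Phi * Psi1)" "j < dim_col (Phi * Psi1)"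
      hence ij: "i < n" "j < n" using Phi Psi1 by auto
      have "(Phi * Psi1) $$ (i,j) = (\<Sum>l<m. fm l i * C (xs!j) (ts!l))"
        using ij Phi Psi1 by (simp add: scalar_prod_def Phi_def Psi1_def atLeast0LessThan)
      also have "\<dots> = poly P (inner (xs!i) (xs!j))" using E1[OF ij(1)] by simp
      also have "\<dots> = of_int (adj i j) + (if i = j then k else 0)" by (rule valij[OF ij])
      finally show "(map_mat of_int A + k \<cdot>\<^sub>m 1\<^sub>m n) $$ (i,j) = (Phi * Psi1) $$ (i,j)"
        using ij by (simp add: A_def)
    qed (use Phi Psi1 A in auto)
    have eq2: "map_mat of_int A2 + k \<cdot>\<^sub>m 1\<^sub>m n = Phi * Psi2"
    proof (rule eq_matI)
      fix i j assume "i < dim_row (Phi * Psi2)" "j < dim_col (Phi * Psi2)"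
      hence ij: "i < n" "j < n" using Phi Psi2 by auto
      have "(Phi * Psi2) $$ (i,j) = (\<Sum>l<m. fm l i * (C (xs!j) (ts!l) - e (ts!l)))"
        using ij Phi Psi2 by (simp add: scalar_prod_def Phi_def Psi2_def atLeast0LessThan)
      also have "\<dots> = (\<Sum>l<m. fm l i * C (xs!j) (ts!l)) - (\<Sum>l<m. fm l i * e (ts!l))"
        by (simp add: right_diff_distrib sum_subtractf)
      also have "\<dots> = poly P (inner (xs!i) (xs!j)) - 1" using E1[OF ij(1)] E2[OF ij(1)] by simp
      also have "\<dots> = of_int (adj i j - 1) + (if i = j then k else 0)" using valij[OF ij] by simp
      finally show "(map_mat of_int A2 + k \<cdot>\<^sub>m 1\<^sub>m n) $$ (i,j) = (Phi * Psi2) $$ (i,j)"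
        using ij by (simp add: A2_def)
    qed (use Phi Psi2 A2 in auto)
    have mn: "m \<le> n" using mN nN by linarith
    have d1: "[:k,1:]^(n-m) dvd char_poly (map_mat of_int A :: real mat)"
      by (rule char_poly_factor[OF _ Phi Psi1 eq1 mn]) (use A in auto)
    have d2: "[:k,1:]^(n-m) dvd char_poly (map_mat of_int A2 :: real mat)"
      by (rule char_poly_factor[OF _ Phi Psi2 eq2 mn]) (use A2 in auto)
    have trA: "(\<Sum>i<n. A$$(i,i)) = 0" by (simp add: A_def adj_def)
    have trA2: "(\<Sum>i<n. A2$$(i,i)) = - int n" by (simp add: A2_def adj_def)
    have n0: "n > 0" using nN N1 by linarith
    show ?thesis
      by (rule integrality[OF A A2 d1 d2]) (use trA trA2 n0 mN nN N1 in auto)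
  qed
  have tb: "(real n * (k - 1/2))\<^sup>2 \<le> real m * (real n * ((k - 1/2)\<^sup>2 + (real n - 1) / 4))"
  proof -
    define h where "h l j = C (xs!j) (ts!l) - e (ts!l) / 2" for l j
    have Mij: "(\<Sum>l<m. fm l i * h l j) = of_int (adj i j) + (if i = j then k else 0) - 1/2"
      if ij: "i < n" "j < n" for i j
    proof -
      have "(\<Sum>l<m. fm l i * h l j) = (\<Sum>l<m. fm l i * C (xs!j) (ts!l)) - (\<Sum>l<m. fm l i * e (ts!l)) / 2"
        by (simp add: h_def right_diff_distrib sum_subtractf sum_divide_distrib)
      also have "\<dots> = poly P (inner (xs!i) (xs!j)) - 1/2" using E1[OF ij(1)] E2[OF ij(1)] by simp
      finally show ?thesis using valij[OF ij] by simp
    qed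
    have tr: "(\<Sum>i<n. \<Sum>l<m. fm l i * h l i) = real n * (k - 1/2)"
      using Mij by (simp add: adj_def)
    have sq: "(\<Sum>i<n. \<Sum>j<n. (\<Sum>l<m. fm l i * h l j)\<^sup>2) = real n * ((k - 1/2)\<^sup>2 + (real n - 1) / 4)"
    proof -
      have "(\<Sum>i<n. \<Sum>j<n. (\<Sum>l<m. fm l i * h l j)\<^sup>2) = (\<Sum>i<n. \<Sum>j<n. if i = j then (k - 1/2)\<^sup>2 else 1/4)"
      proof (intro sum.cong refl)
        fix i j assume "i \<in> {..<n}" "j \<in> {..<n}"
        hence ij: "i < n" "j < n" by auto
        show "(\<Sum>l<m. fm l i * h l j)\<^sup>2 = (if i = j then (k - 1/2)\<^sup>2 else 1/4)"
          using Mij[OF ij] by (auto simp: adj_def power2_eq_square)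
      qed
      also have "\<dots> = (\<Sum>i<n. (k - 1/2)\<^sup>2 + (real n - 1) * (1/4))"
        by (intro sum.cong refl) (simp add: sum_if_diag)
      finally show ?thesis by simp
    qed
    show ?thesis using trace_bound[where f=fm and h=h and n=n and m=m] unfolding tr sq .
  qed
  have "\<bar>k\<bar> \<le> real_of_int \<lfloor>1/2 + sqrt ((real N)^2 / (2 * real N - 2) + 1/4)\<rfloor>"
    by (rule final_arith[OF kZ mN nN N1 tb])
  thus "(\<Prod>\<gamma>\<in>B X - {\<beta>}. (1 - \<gamma>) / (\<beta> - \<gamma>)) \<in> \<int> \<and>
           \<bar>\<Prod>\<gamma>\<in>B X - {\<beta>}. (1 - \<gamma>) / (\<beta> - \<gamma>)\<bar>
             \<le> real_of_int (U (((DIM('a) + s - 2) choose (s - 1)) + ((DIM('a) + s - 3) choose (s - 2))))"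
    using kZ unfolding k_def N_def U_def by simp
qed


end
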